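(* Let $K\ge0$ and $p\in(1,2)$. Then there exists $\varepsilon\in(0,\frac{p-1}{2})$ (depending on $K$ and $p$) such that for all $a,b\in\mathbb R^d$, $$\Psi(a,b,p)\ge\Gamma(a,b,K,\varepsilon,p),$$ where $$\Psi(a,b,p)=|a+b|^p-|a|^p-p|a|^{p-2}\langle a,b\rangle\mathbf 1_{a\ne0},$$ $$\Gamma(a,b,K,\varepsilon,p)=2Kp|a|^{p-1}|b|\mathbf 1_{|b|\ge\vartheta(\varepsilon,p)|a|}+p\varepsilon|a|^{p-2}|b|^2\mathbf 1_{|b|<\vartheta(\varepsilon,p)|a|},$$ $$\vartheta(\varepsilon,p)=\sqrt{\frac12\Big(\frac{p-1}{2\varepsilon}\Big)^{\frac{2}{2-p}}+\frac12}-1.$$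
   Context: In $\Gamma$, when $a=0$ the second indicator vanishes and $|a|^{p-1}=0$, so $\Gamma(0,b,K,\varepsilon,p)=0$ for $b\neq 0$ interpreted via the first term (which equals $0$). *)

theory Defs
  imports "HOL-Analysis.Analysis"
begin

definition vartheta :: "real \<Rightarrow> real \<Rightarrow> real" where
  "vartheta \<epsilon> p = sqrt (1/2 * ((p - 1) / (2 * \<epsilon>)) powr (2 / (2 - p)) + 1/2) - 1"

definition Psi :: "real ^ 'd \<Rightarrow> real ^ 'd \<Rightarrow> real \<Rightarrow> real" where
  "Psi a b p = norm (a + b) powr p - norm a powr p
     - (if a \<noteq> 0 then p * norm a powr (p - 2) * (a \<bullet> b) else 0)"

definition Gamma :: "real ^ 'd \<Rightarrow> real ^ 'd \<Rightarrow> real \<Rightarrow> real \<Rightarrow> real \<Rightarrow> real" where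
  "Gamma a b K \<epsilon> p =
     (if norm b \<ge> vartheta \<epsilon> p * norm a then 2 * K * p * norm a powr (p - 1) * norm b else 0)
   + (if norm b < vartheta \<epsilon> p * norm a then p * \<epsilon> * norm a powr (p - 2) * (norm b)\<^sup>2 else 0)"

end

theory Submission imports Defs begin

lemma bern:
  fixes r x :: real
  assumes "0 \<le> r" "r \<le> 1" "x > -1"
  shows "(1+x) powr r \<le> 1 + r*x"
proof -
  have "(1+x) powr r * 1 powr (1-r) \<le> r*(1+x) + (1-r)*1"
    by (rule Youngs_inequality_0) (use assms in auto)
  then show ?thesis by (simp add: algebra_simps)
qed

lemma subadd:
  fixes a b q :: real
  assumes "0 \<le> a" "0 \<le> b" "0 < q" "q \<le> 1"
  shows "(a+b) powr q \<le> a powr q + b powr q"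
proof (cases "a + b = 0")
  case True then show ?thesis using assms by auto
next
  case False
  then have ab: "a + b > 0" using assms by auto
  have ha: "a * (a+b) powr (q-1) \<le> a powr q"
  proof (cases "a = 0")
    case False
    then have "(a+b) powr (q-1) \<le> a powr (q-1)"
      by (intro powr_mono2') (use assms in auto)
    then have "a * (a+b) powr (q-1) \<le> a * a powr (q-1)"
      using assms by (intro mult_left_mono) auto
    also have "a * a powr (q-1) = a powr q"
      using False assms by (simp add: powr_diff)
    finally show ?thesis .
  qed simp
  have hb: "b * (a+b) powr (q-1) \<le> b powr q"
  proof (cases "b = 0")
    case False
    then have "(a+b) powr (q-1) \<le> b powr (q-1)"
      by (intro powr_mono2') (use assms in auto)
    then have "b * (a+b) powr (q-1) \<le> b * b powr (q-1)"
      using assms by (intro mult_left_mono) auto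
    also have "b * b powr (q-1) = b powr q"
      using False assms by (simp add: powr_diff)
    finally show ?thesis .
  qed simp
  have "(a+b) powr q = (a+b) * (a+b) powr (q-1)"
    using ab by (simp add: powr_diff)
  also have "\<dots> = a * (a+b) powr (q-1) + b * (a+b) powr (q-1)" by (simp add: algebra_simps)
  finally show ?thesis using ha hb by linarith
qed

lemma Q_up:
  fixes p x y :: real
  assumes "1 < p" "p < 2" "0 \<le> x" "x \<le> y" "y \<le> 1"
  shows "x powr p - p/2 * x^2 \<le> y powr p - p/2 * y^2"
proof (rule DERIV_nonneg_imp_increasing_open[OF assms(4)])
  fix w assume w: "x < w" "w < y"
  then have w0: "w > 0" "w \<le> 1" using assms by auto
  have "((\<lambda>w. w powr p - p/2 * w^2) has_real_derivative p * w powr (p-1) - p/2*(2*w)) (at w)"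
    using w0 by (auto intro!: derivative_eq_intros)
  moreover have "w powr 1 \<le> w powr (p-1)"
    by (rule powr_mono') (use assms w0 in auto)
  then have "w \<le> w powr (p-1)" using w0 by simp
  then have "p * w powr (p-1) - p/2*(2*w) \<ge> 0" using assms by (simp add: algebra_simps)
  ultimately show "\<exists>d. ((\<lambda>w. w powr p - p/2 * w^2) has_real_derivative d) (at w) \<and> 0 \<le> d" by blast
next
  show "continuous_on {x..y} (\<lambda>w. w powr p - p/2 * w^2)"
    using assms by (intro continuous_intros continuous_on_powr') auto
qed

lemma Q_down:
  fixes p x y :: real
  assumes "1 < p" "p < 2" "1 \<le> x" "x \<le> y"
  shows "y powr p - p/2 * y^2 \<le> x powr p - p/2 * x^2"
proof (rule DERIV_nonpos_imp_decreasing_open[OF assms(4)])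
  fix w assume w: "x < w" "w < y"
  then have w0: "w > 0" "w \<ge> 1" using assms by auto
  have "((\<lambda>w. w powr p - p/2 * w^2) has_real_derivative p * w powr (p-1) - p/2*(2*w)) (at w)"
    using w0 by (auto intro!: derivative_eq_intros)
  moreover have "w powr (p-1) \<le> w powr 1"
    by (rule powr_mono) (use assms w0 in auto)
  then have "w powr (p-1) \<le> w" using w0 by simp
  then have "p * w powr (p-1) - p/2*(2*w) \<le> 0" using assms by (simp add: algebra_simps)
  ultimately show "\<exists>d. ((\<lambda>w. w powr p - p/2 * w^2) has_real_derivative d) (at w) \<and> d \<le> 0" by blast
next
  show "continuous_on {x..y} (\<lambda>w. w powr p - p/2 * w^2)"
    using assms by (intro continuous_intros continuous_on_powr') auto
qed


lemma key1:
  fixes p t :: real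
  assumes "1 < p" "p < 2" "0 \<le> t"
  shows "1 + (p-1)*t*(1+t) powr (p-2) \<le> (1+t) powr (p-1)"
proof -
  have b: "(1+t) powr (2-p) \<le> 1 + (2-p)*t" by (rule bern) (use assms in auto)
  have pos: "(1+t) powr (p-2) > 0" using assms by auto
  have "(1+t) powr (2-p) * (1+t) powr (p-2) \<le> (1 + (2-p)*t) * (1+t) powr (p-2)"
    using b pos by (intro mult_right_mono) auto
  moreover have "(1+t) powr (2-p) * (1+t) powr (p-2) = 1"
    using assms by (simp flip: powr_add)
  moreover have "(1+t) powr (p-1) = (1+t) * (1+t) powr (p-2)"
  proof -
    have e: "(1+t) powr (1 + (p-2)) = (1+t) powr 1 * (1+t) powr (p-2)" by (rule powr_add)
    have "1 + (p-2) = p - 1" by simp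
    then show ?thesis using e assms by simp
  qed
  ultimately show ?thesis by (simp add: algebra_simps)
qed

lemma Eplus:
  fixes p s :: real
  assumes "1 < p" "p < 2" "0 \<le> s"
  shows "p*(p-1)/2 * s^2 * (1+s) powr (p-2) \<le> (1+s) powr p - 1 - p * s"
proof -
  define C where "C = (1+s) powr (p-2)"
  define G where "G t = (1+t) powr p - 1 - p*t - p*(p-1)/2*t^2*C" for t
  have "G 0 \<le> G s"
  proof (rule DERIV_nonneg_imp_nondecreasing[OF assms(3)])
    fix t assume t: "0 \<le> t" "t \<le> s"
    have d: "(G has_real_derivative (p*(1+t) powr (p-1) - p - p*(p-1)/2*(2*t)*C)) (at t)"
      unfolding G_def using t by (auto intro!: derivative_eq_intros)
    have "C \<le> (1+t) powr (p-2)" unfolding C_def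
      by (rule powr_mono2') (use assms t in auto)
    then have "(p-1)*t*C \<le> (p-1)*t*(1+t) powr (p-2)"
      using assms t by (intro mult_left_mono) auto
    with key1[OF assms(1,2) t(1)] have "1 + (p-1)*t*C \<le> (1+t) powr (p-1)" by linarith
    then have "p*(1 + (p-1)*t*C) \<le> p*(1+t) powr (p-1)" using assms by (intro mult_left_mono) auto
    moreover have "p*(p-1)/2*(2*t)*C = p*((p-1)*t*C)" by (simp add: field_simps)
    ultimately have "0 \<le> p*(1+t) powr (p-1) - p - p*(p-1)/2*(2*t)*C" by (simp add: algebra_simps)
    with d show "\<exists>y. (G has_real_derivative y) (at t) \<and> 0 \<le> y" by blast
  qed
  then show ?thesis unfolding G_def C_def by simp
qed


lemma sq_powr:
  fixes s e :: real
  assumes "s > 0"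
  shows "s^2 * s powr e = s powr (e + 2)"
proof -
  have "s powr (e + 2) = s powr e * s powr 2" by (rule powr_add)
  also have "s powr 2 = s^2" using assms by simp
  finally show ?thesis by simp
qed

lemma Eminus:
  fixes p s :: real
  assumes p: "1 < p" "p < 2" and s: "0 \<le> s"
  shows "p*(p-1)/2 * s^2 * (1+s) powr (p-2) \<le> \<bar>1-s\<bar> powr p - 1 + p * s"
proof -
  have k1: "(p-1)*(p/2) \<le> (p-1)*1" using p by (intro mult_left_mono) auto
  have kp1: "p*(p-1)/2 \<le> p - 1" using k1 by (simp add: algebra_simps)
  have kp: "p*(p-1)/2 \<le> p - 1" "p*(p-1)/2 \<le> 1" "0 \<le> p*(p-1)/2"
    using kp1 p by auto
  consider "s < 1" | "s = 1" | "s > 1" by linarith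
  then show ?thesis
  proof cases
    case 1
    define C where "C = (1+s) powr (p-2)"
    have C1: "C \<le> 1" "0 \<le> C" unfolding C_def using powr_mono2'[of "p-2" 1 "1+s"] p s by auto
    define G where "G t = (1-t) powr p - 1 + p * t - p*(p-1)/2*t^2*C" for t
    have "G 0 \<le> G s"
    proof (rule DERIV_nonneg_imp_nondecreasing[OF s])
      fix t assume t: "0 \<le> t" "t \<le> s"
      have d: "(G has_real_derivative (p - p*(1-t) powr (p-1) - p*(p-1)/2*(2*t)*C)) (at t)"
        unfolding G_def using t 1 by (auto intro!: derivative_eq_intros simp: field_simps)
      have b: "(1+(-t)) powr (p-1) \<le> 1 + (p-1)*(-t)" by (rule bern) (use p t 1 in auto)
      have h1: "(p-1)*t*C \<le> (p-1)*t" using C1 p t by (simp add: mult_left_le)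
      have b': "(1-t) powr (p-1) \<le> 1 - (p-1)*t" using b by simp
      have "(p-1)*t*C \<le> 1 - (1-t) powr (p-1)" using h1 b' by linarith
      then have "p*((p-1)*t*C) \<le> p*(1 - (1-t) powr (p-1))" using p
        by (intro mult_left_mono) auto
      moreover have "p*(p-1)/2*(2*t)*C = p*((p-1)*t*C)" by (simp add: field_simps)
      ultimately have "0 \<le> p - p*(1-t) powr (p-1) - p*(p-1)/2*(2*t)*C" by (simp add: algebra_simps)
      with d show "\<exists>y. (G has_real_derivative y) (at t) \<and> 0 \<le> y" by blast
    qed
    then show ?thesis using 1 unfolding G_def C_def by simp
  next
    case 2
    have "2 powr (p-2) \<le> (1::real)" using powr_mono2'[of "p-2" 1 2] p by simp
    then have "p*(p-1)/2 * 2 powr (p-2) \<le> p*(p-1)/2" using kp by (simp add: mult_left_le)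
    then have "p*(p-1)/2 * 2 powr (p-2) \<le> p - 1" using kp by linarith
    then show ?thesis using 2 by simp
  next
    case 3
    define k where "k = p*(p-1)/2"
    define T where "T t = (t-1) powr p + p * t - 1 - k * t powr p" for t
    have "T 1 \<le> T s"
    proof (rule DERIV_nonneg_imp_increasing_open[of 1 s T])
      show "1 \<le> s" using 3 by simp
      fix t assume t: "1 < t" "t < s"
      have d: "(T has_real_derivative (p*(t-1) powr (p-1) + p - k*(p*t powr (p-1)))) (at t)"
        unfolding T_def using t by (auto intro!: derivative_eq_intros simp: algebra_simps)
      have sa: "((t-1)+1) powr (p-1) \<le> (t-1) powr (p-1) + 1 powr (p-1)"
        by (rule subadd) (use p t in auto)
      have "k \<le> 1" using kp unfolding k_def by simp
      from mult_right_mono[OF this, of "t powr (p-1)"]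
      have "k * t powr (p-1) \<le> t powr (p-1)" by simp
      with sa have "k * t powr (p-1) \<le> (t-1) powr (p-1) + 1" by simp
      then have "p*(k * t powr (p-1)) \<le> p*((t-1) powr (p-1) + 1)" using p by (intro mult_left_mono) auto
      then have "0 \<le> p*(t-1) powr (p-1) + p - k*(p*t powr (p-1))" by (simp add: algebra_simps)
      with d show "\<exists>y. (T has_real_derivative y) (at t) \<and> 0 \<le> y" by blast
    next
      show "continuous_on {1..s} T" unfolding T_def using p
        by (intro continuous_intros continuous_on_powr') auto
    qed
    then have T: "k * s powr p \<le> (s-1) powr p + p * s - 1" using kp p unfolding T_def k_def by simp
    have "(1+s) powr (p-2) \<le> s powr (p-2)" by (rule powr_mono2') (use p 3 in auto)
    then have "k * s^2 * (1+s) powr (p-2) \<le> k * s^2 * s powr (p-2)"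
      using kp unfolding k_def by (intro mult_left_mono) auto
    also have "\<dots> = k * s powr p" using sq_powr[of s "p-2"] 3 by (simp add: mult.assoc)
    finally show ?thesis using T 3 unfolding k_def by simp
  qed
qed


lemma reduce:
  fixes a b :: "real ^ 'd" and p :: real
  assumes p: "1 < p" "p < 2" and a: "a \<noteq> 0"
  shows "norm a powr p * (p*(p-1)/2 * (norm b / norm a)^2 * (1 + norm b / norm a) powr (p-2))
          \<le> Psi a b p"
proof -
  define r where "r = norm a"
  define s where "s = norm b / r"
  define w where "w = norm (a+b) / r"
  have r: "r > 0" using a unfolding r_def by simp
  have s0: "s \<ge> 0" using r unfolding s_def by simp
  have w0: "w \<ge> 0" using r unfolding w_def by simp
  have nb: "norm b = r * s" using r unfolding s_def by simp
  have nab: "norm (a+b) = r * w" using r unfolding w_def by simp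
  have sq: "(norm (a+b))^2 = r^2 + 2*(a \<bullet> b) + (norm b)^2"
    unfolding r_def power2_norm_eq_inner by (simp add: inner_add inner_commute)
  have c: "a \<bullet> b = r^2 * (w^2 - 1 - s^2) / 2"
    using sq unfolding nab nb by (simp add: field_simps power_mult_distrib)
  define Qf where "Qf x = x powr p - p/2 * x^2" for x
  define Qa where "Qa x = Qf x + (p/2*(1+s^2) - 1)" for x
  have rp: "r powr (p-2) * r^2 = r powr p"
    using sq_powr[OF r, of "p-2"] by (simp add: mult.commute)
  have Psi: "Psi a b p = r powr p * Qa w"
  proof -
    have "Psi a b p = (r*w) powr p - r powr p - p * r powr (p-2) * (r^2 * (w^2 - 1 - s^2) / 2)"
      unfolding Psi_def using a c nab r_def by simp
    also have "\<dots> = r powr p * w powr p - r powr p - p * (r powr (p-2) * r^2) * (w^2 - 1 - s^2) / 2"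
      using r w0 by (simp add: powr_mult)
    also have "\<dots> = r powr p * Qa w"
      unfolding rp Qa_def Qf_def by (simp add: field_simps)
    finally show ?thesis .
  qed
  have up: "norm (a+b) \<le> r + norm b" unfolding r_def by (rule norm_triangle_ineq)
  have l1: "r \<le> norm (a+b) + norm b" using norm_triangle_ineq[of "a+b" "-b"] unfolding r_def by simp
  have l2: "norm b \<le> norm (a+b) + r" using norm_triangle_ineq[of "a+b" "-a"] unfolding r_def by simp
  have wu: "w \<le> 1 + s" using up r unfolding nab nb
    by (metis mult.right_neutral mult_le_cancel_left_pos distrib_left)
  have wl: "\<bar>1 - s\<bar> \<le> w"
  proof -
    have "r * 1 \<le> r * (w + s)" "r * s \<le> r * (w + 1)" using l1 l2 unfolding nab nb by (simp_all add: algebra_simps)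
    then have "1 \<le> w + s" "s \<le> w + 1" using r by (simp_all add: mult_le_cancel_left_pos)
    then show ?thesis by linarith
  qed
  define R where "R = p*(p-1)/2 * s^2 * (1+s) powr (p-2)"
  have "R \<le> Qa w"
  proof (cases "w \<le> 1")
    case True
    have "Qf \<bar>1-s\<bar> \<le> Qf w" unfolding Qf_def by (rule Q_up) (use p True wl in auto)
    moreover have "Qa \<bar>1-s\<bar> = \<bar>1-s\<bar> powr p - 1 + p * s"
      unfolding Qa_def Qf_def by (simp add: power2_eq_square algebra_simps)
    moreover have "R \<le> \<bar>1-s\<bar> powr p - 1 + p * s" unfolding R_def by (rule Eminus) (use p s0 in auto)
    ultimately show ?thesis unfolding Qa_def by linarith
  next
    case False
    have "Qf (1+s) \<le> Qf w" unfolding Qf_def by (rule Q_down) (use p False wu in auto)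
    moreover have "Qa (1+s) = (1+s) powr p - 1 - p * s"
      unfolding Qa_def Qf_def by (simp add: power2_eq_square algebra_simps)
    moreover have "R \<le> (1+s) powr p - 1 - p * s" unfolding R_def by (rule Eplus) (use p s0 in auto)
    ultimately show ?thesis unfolding Qa_def by linarith
  qed
  then have "r powr p * R \<le> r powr p * Qa w" by (intro mult_left_mono) auto
  then show ?thesis unfolding Psi R_def s_def r_def .
qed


theorem lemma5:
  fixes K p :: real
  assumes "K \<ge> 0" and "1 < p" and "p < 2"
  shows "\<exists>\<epsilon>. 0 < \<epsilon> \<and> \<epsilon> < (p - 1) / 2 \<and>
           (\<forall>a b :: real ^ 'd. Psi a b p \<ge> Gamma a b K \<epsilon> p)"
proof -
  have p: "1 < p" "p < 2" using assms by auto
  define k where "k = p*(p-1)/2"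
  have k0: "k > 0" unfolding k_def using p by simp
  define C0 where "C0 = 2*K*p / (k * 2 powr (p-2))"
  have C00: "C0 \<ge> 0" unfolding C0_def using assms k0 by simp
  define th0 where "th0 = max 1 (C0 powr (1/(p-1)))"
  have th01: "th0 \<ge> 1" unfolding th0_def by simp
  define M where "M = 2*(th0+1)^2"
  have "(2::real)^2 \<le> (th0+1)^2" by (rule power_mono) (use th01 in auto)
  then have M1: "M \<ge> 8" unfolding M_def by simp
  define e where "e = (p-1)/2 * M powr ((p-2)/2)"
  have Mpos: "M powr ((p-2)/2) > 0" using M1 by simp
  have e0: "0 < e" unfolding e_def using p Mpos by simp
  have Mlt: "M powr ((p-2)/2) < 1" using powr_less_mono2_neg[of "(p-2)/2" 1 M] p M1 by simp
  have e1: "e < (p-1)/2" unfolding e_def using Mlt p by simp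
  define th where "th = vartheta e p"
  have q: "(p-1)/(2*e) = M powr ((2-p)/2)"
  proof -
    have "(p-1)/(2*e) = 1 / M powr ((p-2)/2)" unfolding e_def using p by simp
    also have "\<dots> = M powr (- ((p-2)/2))" by (simp add: powr_minus_divide)
    also have "- ((p-2)/2) = (2-p)/2" by (simp add: field_simps)
    finally show ?thesis .
  qed
  have ex: "(2-p)/2 * (2/(2-p)) = 1" using p by (simp add: field_simps)
  have qq: "((p-1)/(2*e)) powr (2/(2-p)) = M"
    unfolding q powr_powr ex using p M1 by simp
  have th1: "1 + th = sqrt (M/2 + 1/2)" unfolding th_def vartheta_def qq by simp
  have th2: "(1+th)^2 = M/2 + 1/2" unfolding th1 using M1 by simp
  have th3: "th0 \<le> th"
  proof -
    have "sqrt ((th0+1)^2) \<le> sqrt (M/2+1/2)" unfolding M_def by (intro real_sqrt_le_mono) simp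
    then show ?thesis using th1 th01 by simp
  qed
  have small: "p * e \<le> k * (1+s) powr (p-2)" if s: "0 \<le> s" "s < th" for s
  proof -
    have "(1+th) powr (p-2) \<le> (1+s) powr (p-2)" by (rule powr_mono2') (use p s in auto)
    moreover have "(1+th) powr (p-2) = ((1+th)^2) powr ((p-2)/2)"
    proof -
      have "2 * ((p-2)/2) = p - 2" by simp
      then have "((1+th) powr 2) powr ((p-2)/2) = (1+th) powr (p-2)" by (simp only: powr_powr)
      moreover have "(1+th) powr 2 = (1+th)^2" using s by simp
      ultimately show ?thesis by simp
    qed
    moreover have "M powr ((p-2)/2) \<le> ((1+th)^2) powr ((p-2)/2)"
      by (rule powr_mono2') (use p th2 M1 in auto)
    ultimately have "M powr ((p-2)/2) \<le> (1+s) powr (p-2)" by linarith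
    then have "k * M powr ((p-2)/2) \<le> k * (1+s) powr (p-2)" using k0 by simp
    moreover have "p * e = k * M powr ((p-2)/2)" unfolding e_def k_def by simp
    ultimately show ?thesis by simp
  qed
  have large: "2*K*p* s \<le> k * s^2 * (1+s) powr (p-2)" if s: "th \<le> s" for s
  proof -
    have s1: "s \<ge> 1" "s \<ge> th0" using s th3 th01 by auto
    have "(2* s) powr (p-2) \<le> (1+s) powr (p-2)" by (rule powr_mono2') (use p s1 in auto)
    then have a1: "2 powr (p-2) * s powr (p-2) \<le> (1+s) powr (p-2)" using s1 by (simp add: powr_mult)
    have "C0 = (C0 powr (1/(p-1))) powr (p-1)" using C00 p by (simp add: powr_powr)
    also have "\<dots> \<le> s powr (p-1)"
      by (rule powr_mono2) (use p s1 th0_def in auto)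
    finally have a2: "C0 \<le> s powr (p-1)" .
    have sp: "s^2 * s powr (p-2) = s * s powr (p-1)"
      using sq_powr[of s "p-2"] s1 powr_add[of s 1 "p-1"] by simp
    have "2*K*p* s = k * 2 powr (p-2) * C0 * s" unfolding C0_def using k0 by simp
    also have "\<dots> \<le> k * 2 powr (p-2) * s powr (p-1) * s"
      using a2 k0 s1 by (intro mult_right_mono mult_left_mono) auto
    also have "\<dots> = k * 2 powr (p-2) * (s^2 * s powr (p-2))" unfolding sp by simp
    also have "\<dots> = k * s^2 * (2 powr (p-2) * s powr (p-2))" by simp
    also have "\<dots> \<le> k * s^2 * (1+s) powr (p-2)"
      using a1 k0 by (intro mult_left_mono) auto
    finally show ?thesis .
  qed
  have main: "Gamma a b K e p \<le> Psi a b p" for a b :: "real ^ 'd"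
  proof (cases "a = 0")
    case True
    have "Gamma a b K e p = 0" unfolding Gamma_def using True p by simp
    moreover have "Psi a b p = norm b powr p" unfolding Psi_def using True p by simp
    ultimately show ?thesis by simp
  next
    case False
    define r where "r = norm a"
    define s where "s = norm b / r"
    have r: "r > 0" using False unfolding r_def by simp
    have s0: "s \<ge> 0" using r unfolding s_def by simp
    have nb: "norm b = r * s" using r unfolding s_def by simp
    have red: "r powr p * (k * s^2 * (1+s) powr (p-2)) \<le> Psi a b p"
      using reduce[OF p False, of b] unfolding k_def s_def r_def by simp
    have rp0: "r powr p > 0" using r by simp
    show ?thesis
    proof (cases "th * r \<le> norm b")
      case True
      then have ss: "th \<le> s" using r unfolding nb by (simp add: mult.commute)
      have "Gamma a b K e p = 2*K*p * (r powr (p-1) * r) * s"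
        unfolding Gamma_def th_def[symmetric] using True unfolding r_def[symmetric] nb by simp
      also have "r powr (p-1) * r = r powr p"
        using powr_add[of r "p-1" 1] r by simp
      finally have G: "Gamma a b K e p = r powr p * (2*K*p* s)" by simp
      show ?thesis unfolding G using large[OF ss] rp0 red
        by (meson mult_left_mono less_imp_le order_trans)
    next
      case False
      then have ss: "s < th" using r unfolding nb by (simp add: mult.commute)
      have "Gamma a b K e p = p * e * (r powr (p-2) * r^2) * s^2"
        unfolding Gamma_def th_def[symmetric] using False unfolding r_def[symmetric] nb
        by (simp add: power_mult_distrib)
      also have "r powr (p-2) * r^2 = r powr p"
        using sq_powr[OF r, of "p-2"] by (simp add: mult.commute)
      finally have G: "Gamma a b K e p = r powr p * (s^2 * (p*e))" by simp
      have "s^2 * (p*e) \<le> s^2 * (k * (1+s) powr (p-2))"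
        using small[OF s0 ss] by (intro mult_left_mono) auto
      then have "s^2 * (p*e) \<le> k * s^2 * (1+s) powr (p-2)" by (simp add: algebra_simps)
      then show ?thesis unfolding G using rp0 red
        by (meson mult_left_mono less_imp_le order_trans)
    qed
  qed
  show ?thesis using e0 e1 main by blast
qed

end
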